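(* For every $N\ge1$, the (free) Magnetic Tower of Hanoi puzzle with $N$ disks can be solved in $S_{62}(N)$ moves, where $S_{62}(N)=3^{N-1}+N-1$ for $N\le3$, and for $N>3$ $$S_{62}(N)=2S_{100}(N-2)+2S_{100}(N-3)+S_{67}(N-1)+S_{67}(N-2)+S_{SF}(N-3)+4,$$ with $S_{100}(n)=\frac{3^n-1}{2}$, $S_{67}(n)=3^{n-1}+n-1$, and $S_{SF}(n)=(3^{n-1}+n-1)+\frac{3^{n-1}-1}{8}-\frac{n-1}{2}$ for $n$ odd, $S_{SF}(n)=(3^{n-1}+n-1)+\frac{3^{n-1}-3}{8}-\frac{n-2}{2}$ for $n$ even. Moreover $$\frac{S_{62}(N)}{(3^N-1)/2}\longrightarrow\frac{67}{108}\quad (N\to\infty).$$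
   Context: Magnetic Tower of Hanoi (MToH): there are three posts and $N$ disks of distinct diameters, numbered $1$ (largest) to $N$ (smallest). Each disk has two faces, one Red and one Blue. Initially all $N$ disks are stacked on a source post $S$ in decreasing size from bottom to top, each with its Red face up. A move consists of lifting the top disk of some post, turning it upside down, and placing it on top of another post. Rules: (Size rule) a disk may never be placed on a smaller disk; (Magnet rule) a disk may never be placed so that its downward-facing side has the same color as the upward-facing side of the disk it lands on. An empty post accepts a disk in either orientation. The puzzle is solved when all $N$ disks are on a destination post $D$ (one of the two initially empty posts) in decreasing size from bottom to top. *)

theory Defs
  imports Complex_Main
begin

text \<open>Posts are 0, 1, 2 (post 0 is the source S). A configuration maps each post to the
list of disks on it, listed from TOP to BOTTOM; each entry is (disk number, upward colour),
where disk 1 is the largest and disk N the smallest, and the colour True means Red face up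
(so Blue face down), False means Blue face up (Red face down).\<close>

type_synonym config = "nat \<Rightarrow> (nat \<times> bool) list"

text \<open>A legal move from post p to post q: lift the top disk of p, turn it upside down
(its old upward colour becomes its downward colour) and put it on q, respecting the size
rule (only on a larger disk, i.e. one with smaller number) and the magnet rule (the downward
colour of the moved disk must differ from the upward colour of the disk it lands on).\<close>

definition move_ok :: "config \<Rightarrow> nat \<Rightarrow> nat \<Rightarrow> bool" where
  "move_ok c p q \<longleftrightarrow> p < 3 \<and> q < 3 \<and> p \<noteq> q \<and> c p \<noteq> [] \<and>
     (case c q of [] \<Rightarrow> True
      | (e, u') # _ \<Rightarrow> e < fst (hd (c p)) \<and> snd (hd (c p)) \<noteq> u')"

definition apply_move :: "config \<Rightarrow> nat \<Rightarrow> nat \<Rightarrow> config" where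
  "apply_move c p q = c(p := tl (c p), q := (fst (hd (c p)), \<not> snd (hd (c p))) # c q)"

fun run :: "config \<Rightarrow> (nat \<times> nat) list \<Rightarrow> config option" where
  "run c [] = Some c"
| "run c ((p, q) # ms) = (if move_ok c p q then run (apply_move c p q) ms else None)"

definition initial_config :: "nat \<Rightarrow> config" where
  "initial_config N = (\<lambda>p. if p = 0 then map (\<lambda>i. (i, True)) (rev [1..<N+1]) else [])"

definition solved :: "nat \<Rightarrow> nat \<Rightarrow> config \<Rightarrow> bool" where
  "solved N D c \<longleftrightarrow> map fst (c D) = rev [1..<N+1] \<and> (\<forall>p. p \<noteq> D \<longrightarrow> c p = [])"

definition solves_in :: "nat \<Rightarrow> nat \<Rightarrow> nat \<Rightarrow> bool" where
  "solves_in N D k \<longleftrightarrow> (\<exists>ms c. length ms = k \<and> run (initial_config N) ms = Some c \<and> solved N D c)"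

definition S100 :: "nat \<Rightarrow> real" where
  "S100 n = (3 ^ n - 1) / 2"

definition S67 :: "nat \<Rightarrow> real" where
  "S67 n = 3 ^ (n - 1) + real n - 1"

definition SSF :: "nat \<Rightarrow> real" where
  "SSF n = (if odd n then (3 ^ (n - 1) + real n - 1) + (3 ^ (n - 1) - 1) / 8 - (real n - 1) / 2
            else (3 ^ (n - 1) + real n - 1) + (3 ^ (n - 1) - 3) / 8 - (real n - 2) / 2)"

definition S62 :: "nat \<Rightarrow> real" where
  "S62 N = (if N \<le> 3 then 3 ^ (N - 1) + real N - 1
            else 2 * S100 (N - 2) + 2 * S100 (N - 3) + S67 (N - 1) + S67 (N - 2) + SSF (N - 3) + 4)"

end

theory Submission
  imports Defs
begin

definition tower :: "nat \<Rightarrow> nat \<Rightarrow> bool \<Rightarrow> (nat \<times> bool) list" where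
  "tower k m s = map (\<lambda>i. (i, s)) (rev [Suc k..<Suc (k + m)])"

definition ok :: "nat \<Rightarrow> bool \<Rightarrow> (nat \<times> bool) list \<Rightarrow> bool" where
  "ok k s L \<longleftrightarrow> (case L of [] \<Rightarrow> True | (e, u) # _ \<Rightarrow> e \<le> k \<and> u = s)"

lemma tower_0[simp]: "tower k 0 s = []" by (simp add: tower_def)

lemma tower_Suc: "tower k (Suc m) s = tower (Suc k) m s @ [(Suc k, s)]"
  by (simp add: tower_def upt_conv_Cons)

lemma ok_Nil[simp]: "ok k s []" by (simp add: ok_def)
lemma ok_Cons[simp]: "ok k s ((e,u) # L) \<longleftrightarrow> e \<le> k \<and> u = s" by (simp add: ok_def)
lemma ok_Suc: "ok k s L \<Longrightarrow> ok (Suc k) s L"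
  by (auto simp: ok_def split: list.splits)

lemma run_append: "run c (xs @ ys) = (case run c xs of None \<Rightarrow> None | Some c' \<Rightarrow> run c' ys)"
  by (induction c xs rule: run.induct) auto

lemma move_step:
  assumes "p < 3" "q < 3" "p \<noteq> q" "cf p = (Suc k, u) # L" "ok k (\<not> u) (cf q)"
  shows "run cf ((p, q) # rest) = run (cf(p := L, q := (Suc k, \<not> u) # cf q)) rest"
proof -
  have "move_ok cf p q" using assms
    by (auto simp: move_ok_def ok_def split: list.splits)
  moreover have "apply_move cf p q = cf(p := L, q := (Suc k, \<not> u) # cf q)"
    using assms by (simp add: apply_move_def)
  ultimately show ?thesis by simp
qed

fun e2e :: "nat \<Rightarrow> nat \<Rightarrow> nat \<Rightarrow> nat \<Rightarrow> (nat \<times> nat) list" where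
  "e2e 0 a b c = []"
| "e2e (Suc m) a b c = e2e m a b c @ (a, c) # e2e m b a c @ (c, b) # e2e m a b c"

abbreviation "posts a b c \<equiv> a < 3 \<and> b < 3 \<and> c < 3 \<and> a \<noteq> b \<and> a \<noteq> c \<and> b \<noteq> c"

lemma e2e_run:
  "posts a b c \<Longrightarrow> cf a = tower k m s @ LA \<Longrightarrow> ok k s LA \<Longrightarrow> ok k s (cf b) \<Longrightarrow> ok k (\<not> s) (cf c) \<Longrightarrow>
   cf' = cf(a := LA, b := tower k m s @ cf b) \<Longrightarrow>
   run cf (e2e m a b c @ rest) = run cf' rest"
proof (induction m arbitrary: k a b c cf LA rest cf')
  case 0
  then show ?case by (simp add: fun_upd_idem)
next
  case (Suc m)
  let ?T = "tower (Suc k) m s"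
  note P = Suc.prems
  have "run cf (e2e (Suc m) a b c @ rest)
      = run cf (e2e m a b c @ (a, c) # e2e m b a c @ (c, b) # e2e m a b c @ rest)" by simp
  also have "\<dots> = run (cf(a := (Suc k, s) # LA, b := ?T @ cf b)) ((a, c) # e2e m b a c @ (c, b) # e2e m a b c @ rest)"
    by (rule Suc.IH[where k="Suc k" and LA="(Suc k, s) # LA"]) (use P in \<open>auto simp: tower_Suc ok_Suc\<close>)
  also have "\<dots> = run (cf(a := LA, b := ?T @ cf b, c := (Suc k, \<not> s) # cf c)) (e2e m b a c @ (c, b) # e2e m a b c @ rest)"
    by (subst move_step[where k=k]) (use P in \<open>auto simp: fun_upd_twist\<close>)
  also have "\<dots> = run (cf(a := ?T @ LA, b := cf b, c := (Suc k, \<not> s) # cf c)) ((c, b) # e2e m a b c @ rest)"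
    by (rule Suc.IH[where k="Suc k" and LA="cf b"]) (use P in \<open>auto simp: ok_Suc fun_eq_iff\<close>)
  also have "\<dots> = run (cf(a := ?T @ LA, b := (Suc k, s) # cf b, c := cf c)) (e2e m a b c @ rest)"
    by (subst move_step[where k=k]) (use P in \<open>auto simp: fun_upd_twist\<close>)
  also have "\<dots> = run cf' rest"
    by (rule Suc.IH[where k="Suc k" and LA="LA"]) (use P in \<open>auto simp: ok_Suc fun_eq_iff tower_Suc\<close>)
  finally show ?case .
qed


fun c2e :: "nat \<Rightarrow> nat \<Rightarrow> nat \<Rightarrow> nat \<Rightarrow> (nat \<times> nat) list" where
  "c2e 0 a b c = []"
| "c2e (Suc m) a b c = c2e m a c b @ (a, b) # e2e m c b a"

fun e2c :: "nat \<Rightarrow> nat \<Rightarrow> nat \<Rightarrow> nat \<Rightarrow> (nat \<times> nat) list" where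
  "e2c 0 a b c = []"
| "e2c (Suc m) a b c = e2e m a c b @ (a, b) # e2c m c b a"

fun X :: "nat \<Rightarrow> nat \<Rightarrow> nat \<Rightarrow> nat \<Rightarrow> (nat \<times> nat) list" where
  "X 0 a b c = []"
| "X (Suc m) a b c = e2e m a b c @ (a, c) # c2e m b a c @ (c, b) # e2c m a b c"

fun Xr :: "nat \<Rightarrow> nat \<Rightarrow> nat \<Rightarrow> nat \<Rightarrow> (nat \<times> nat) list" where
  "Xr 0 a b c = []"
| "Xr (Suc m) a b c = c2e m a b c @ (a, c) # e2c m b a c @ (c, b) # e2e m a b c"

fun U :: "nat \<Rightarrow> nat \<Rightarrow> nat \<Rightarrow> nat \<Rightarrow> (nat \<times> nat) list" where
  "U 0 a b c = []"
| "U (Suc m) a b c = U m a c b @ (a, b) # X m c b a"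

fun Ur :: "nat \<Rightarrow> nat \<Rightarrow> nat \<Rightarrow> nat \<Rightarrow> (nat \<times> nat) list" where
  "Ur 0 a b c = []"
| "Ur (Suc m) a b c = Xr m a c b @ (a, b) # Ur m c b a"

fun Z :: "nat \<Rightarrow> nat \<Rightarrow> nat \<Rightarrow> nat \<Rightarrow> (nat \<times> nat) list"
and Yr :: "nat \<Rightarrow> nat \<Rightarrow> nat \<Rightarrow> nat \<Rightarrow> (nat \<times> nat) list" where
  "Z 0 a b c = []"
| "Z (Suc m) a b c = Yr m a c b @ (a, b) # X m c b a"
| "Yr 0 a b c = []"
| "Yr (Suc m) a b c = Z m a c b @ (a, b) # e2e m c b a"

fun Vr :: "nat \<Rightarrow> nat \<Rightarrow> nat \<Rightarrow> nat \<Rightarrow> (nat \<times> nat) list" where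
  "Vr 0 a b c = []"
| "Vr (Suc m) a b c = e2e m a b c @ (a, c) # Yr m b a c @ (c, b) # Ur m a b c"

lemma c2e_run:
  "posts a b c \<Longrightarrow> cf a = tower k m s @ LA \<Longrightarrow> ok k s LA \<Longrightarrow> ok k (\<not> s) (cf b) \<Longrightarrow> ok k (\<not> s) (cf c) \<Longrightarrow>
   cf' = cf(a := LA, b := tower k m (\<not> s) @ cf b) \<Longrightarrow>
   run cf (c2e m a b c @ rest) = run cf' rest"
proof (induction m arbitrary: k a b c cf LA rest cf')
  case 0
  then show ?case by (simp add: fun_upd_idem)
next
  case (Suc m)
  let ?T = "tower (Suc k) m (\<not> s)"
  note P = Suc.prems
  have "run cf (c2e (Suc m) a b c @ rest)
      = run cf (c2e m a c b @ (a, b) # e2e m c b a @ rest)" by simp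
  also have "\<dots> = run (cf(a := (Suc k, s) # LA, c := ?T @ cf c)) ((a, b) # e2e m c b a @ rest)"
    by (rule Suc.IH[where k="Suc k" and LA="(Suc k, s) # LA"]) (use P in \<open>auto simp: tower_Suc ok_Suc\<close>)
  also have "\<dots> = run (cf(a := LA, c := ?T @ cf c, b := (Suc k, \<not> s) # cf b)) (e2e m c b a @ rest)"
    by (subst move_step[where k=k]) (use P in \<open>auto simp: fun_upd_twist\<close>)
  also have "\<dots> = run cf' rest"
    by (rule e2e_run[where k="Suc k" and LA="cf c"]) (use P in \<open>auto simp: ok_Suc fun_eq_iff tower_Suc\<close>)
  finally show ?case .
qed

lemma e2c_run:
  "posts a b c \<Longrightarrow> cf a = tower k m s @ LA \<Longrightarrow> ok k s LA \<Longrightarrow> ok k (\<not> s) (cf b) \<Longrightarrow> ok k s (cf c) \<Longrightarrow>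
   cf' = cf(a := LA, b := tower k m (\<not> s) @ cf b) \<Longrightarrow>
   run cf (e2c m a b c @ rest) = run cf' rest"
proof (induction m arbitrary: k a b c cf LA rest cf')
  case 0
  then show ?case by (simp add: fun_upd_idem)
next
  case (Suc m)
  let ?T = "tower (Suc k) m s"
  let ?T' = "tower (Suc k) m (\<not> s)"
  note P = Suc.prems
  have "run cf (e2c (Suc m) a b c @ rest)
      = run cf (e2e m a c b @ (a, b) # e2c m c b a @ rest)" by simp
  also have "\<dots> = run (cf(a := (Suc k, s) # LA, c := ?T @ cf c)) ((a, b) # e2c m c b a @ rest)"
    by (rule e2e_run[where k="Suc k" and LA="(Suc k, s) # LA"]) (use P in \<open>auto simp: tower_Suc ok_Suc\<close>)
  also have "\<dots> = run (cf(a := LA, c := ?T @ cf c, b := (Suc k, \<not> s) # cf b)) (e2c m c b a @ rest)"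
    by (subst move_step[where k=k]) (use P in \<open>auto simp: fun_upd_twist\<close>)
  also have "\<dots> = run cf' rest"
    by (rule Suc.IH[where k="Suc k" and LA="cf c"]) (use P in \<open>auto simp: ok_Suc fun_eq_iff tower_Suc\<close>)
  finally show ?case .
qed

lemma X_run:
  "posts a b c \<Longrightarrow> cf a = tower k m s \<Longrightarrow> ok k s (cf b) \<Longrightarrow> ok k (\<not> s) (cf c) \<Longrightarrow>
   cf' = cf(a := [], b := tower k m s @ cf b) \<Longrightarrow>
   run cf (X m a b c @ rest) = run cf' rest"
proof (cases m)
  case 0
  then show "posts a b c \<Longrightarrow> cf a = tower k m s \<Longrightarrow> ok k s (cf b) \<Longrightarrow> ok k (\<not> s) (cf c) \<Longrightarrow>
   cf' = cf(a := [], b := tower k m s @ cf b) \<Longrightarrow> run cf (X m a b c @ rest) = run cf' rest"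
    by (simp add: fun_upd_idem)
next
  case (Suc j)
  assume P: "posts a b c" "cf a = tower k m s" "ok k s (cf b)" "ok k (\<not> s) (cf c)"
    "cf' = cf(a := [], b := tower k m s @ cf b)"
  let ?T = "tower (Suc k) j s"
  let ?T' = "tower (Suc k) j (\<not> s)"
  have "run cf (X m a b c @ rest)
      = run cf (e2e j a b c @ (a, c) # c2e j b a c @ (c, b) # e2c j a b c @ rest)" using Suc by simp
  also have "\<dots> = run (cf(a := [(Suc k, s)], b := ?T @ cf b)) ((a, c) # c2e j b a c @ (c, b) # e2c j a b c @ rest)"
    by (rule e2e_run[where k="Suc k" and LA="[(Suc k, s)]"]) (use P Suc in \<open>auto simp: tower_Suc ok_Suc\<close>)
  also have "\<dots> = run (cf(a := [], b := ?T @ cf b, c := (Suc k, \<not> s) # cf c)) (c2e j b a c @ (c, b) # e2c j a b c @ rest)"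
    by (subst move_step[where k=k]) (use P in \<open>auto simp: fun_upd_twist\<close>)
  also have "\<dots> = run (cf(a := ?T', b := cf b, c := (Suc k, \<not> s) # cf c)) ((c, b) # e2c j a b c @ rest)"
    by (rule c2e_run[where k="Suc k" and LA="cf b"]) (use P in \<open>auto simp: ok_Suc fun_eq_iff\<close>)
  also have "\<dots> = run (cf(a := ?T', b := (Suc k, s) # cf b, c := cf c)) (e2c j a b c @ rest)"
    by (subst move_step[where k=k]) (use P in \<open>auto simp: fun_upd_twist\<close>)
  also have "\<dots> = run cf' rest"
    by (rule e2c_run[where k="Suc k" and LA="[]"]) (use P Suc in \<open>auto simp: ok_Suc fun_eq_iff tower_Suc\<close>)
  finally show ?thesis .
qed

lemma Xr_run:
  "posts a b c \<Longrightarrow> cf a = tower k m s @ LA \<Longrightarrow> ok k s LA \<Longrightarrow> cf b = [] \<Longrightarrow> ok k (\<not> s) (cf c) \<Longrightarrow>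
   cf' = cf(a := LA, b := tower k m s) \<Longrightarrow>
   run cf (Xr m a b c @ rest) = run cf' rest"
proof (cases m)
  case 0
  then show "posts a b c \<Longrightarrow> cf a = tower k m s @ LA \<Longrightarrow> ok k s LA \<Longrightarrow> cf b = [] \<Longrightarrow> ok k (\<not> s) (cf c) \<Longrightarrow>
   cf' = cf(a := LA, b := tower k m s) \<Longrightarrow> run cf (Xr m a b c @ rest) = run cf' rest"
    by (simp add: fun_upd_idem)
next
  case (Suc j)
  assume P: "posts a b c" "cf a = tower k m s @ LA" "ok k s LA" "cf b = []" "ok k (\<not> s) (cf c)"
    "cf' = cf(a := LA, b := tower k m s)"
  let ?T = "tower (Suc k) j s"
  let ?T' = "tower (Suc k) j (\<not> s)"
  have "run cf (Xr m a b c @ rest)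
      = run cf (c2e j a b c @ (a, c) # e2c j b a c @ (c, b) # e2e j a b c @ rest)" using Suc by simp
  also have "\<dots> = run (cf(a := (Suc k, s) # LA, b := ?T')) ((a, c) # e2c j b a c @ (c, b) # e2e j a b c @ rest)"
    by (rule c2e_run[where k="Suc k" and LA="(Suc k, s) # LA"]) (use P Suc in \<open>auto simp: tower_Suc ok_Suc\<close>)
  also have "\<dots> = run (cf(a := LA, b := ?T', c := (Suc k, \<not> s) # cf c)) (e2c j b a c @ (c, b) # e2e j a b c @ rest)"
    by (subst move_step[where k=k]) (use P in \<open>auto simp: fun_upd_twist\<close>)
  also have "\<dots> = run (cf(a := ?T @ LA, b := [], c := (Suc k, \<not> s) # cf c)) ((c, b) # e2e j a b c @ rest)"
    by (rule e2c_run[where k="Suc k" and LA="[]"]) (use P in \<open>auto simp: ok_Suc fun_eq_iff\<close>)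
  also have "\<dots> = run (cf(a := ?T @ LA, b := [(Suc k, s)], c := cf c)) (e2e j a b c @ rest)"
    by (subst move_step[where k=k]) (use P in \<open>auto simp: fun_upd_twist\<close>)
  also have "\<dots> = run cf' rest"
    by (rule e2e_run[where k="Suc k" and LA="LA"]) (use P Suc in \<open>auto simp: ok_Suc fun_eq_iff tower_Suc\<close>)
  finally show ?thesis .
qed


lemma U_run:
  "posts a b c \<Longrightarrow> cf a = tower k m s @ LA \<Longrightarrow> ok k s LA \<Longrightarrow> cf b = [] \<Longrightarrow> cf c = [] \<Longrightarrow>
   cf' = cf(a := LA, b := tower k m (\<not> s)) \<Longrightarrow>
   run cf (U m a b c @ rest) = run cf' rest"
proof (induction m arbitrary: k a b c cf LA rest cf')
  case 0
  then show ?case by (simp add: fun_upd_idem)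
next
  case (Suc m)
  let ?T' = "tower (Suc k) m (\<not> s)"
  note P = Suc.prems
  have "run cf (U (Suc m) a b c @ rest)
      = run cf (U m a c b @ (a, b) # X m c b a @ rest)" by simp
  also have "\<dots> = run (cf(a := (Suc k, s) # LA, c := ?T')) ((a, b) # X m c b a @ rest)"
    by (rule Suc.IH[where k="Suc k" and LA="(Suc k, s) # LA"]) (use P in \<open>auto simp: tower_Suc ok_Suc\<close>)
  also have "\<dots> = run (cf(a := LA, c := ?T', b := [(Suc k, \<not> s)])) (X m c b a @ rest)"
    by (subst move_step[where k=k]) (use P in \<open>auto simp: fun_upd_twist\<close>)
  also have "\<dots> = run cf' rest"
    by (rule X_run[where k="Suc k"]) (use P in \<open>auto simp: ok_Suc fun_eq_iff tower_Suc\<close>)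
  finally show ?case .
qed

lemma Ur_run:
  "posts a b c \<Longrightarrow> cf a = tower k m s \<Longrightarrow> ok k (\<not> s) (cf b) \<Longrightarrow> cf c = [] \<Longrightarrow>
   cf' = cf(a := [], b := tower k m (\<not> s) @ cf b) \<Longrightarrow>
   run cf (Ur m a b c @ rest) = run cf' rest"
proof (induction m arbitrary: k a b c cf rest cf')
  case 0
  then show ?case by (simp add: fun_upd_idem)
next
  case (Suc m)
  let ?T = "tower (Suc k) m s"
  note P = Suc.prems
  have "run cf (Ur (Suc m) a b c @ rest)
      = run cf (Xr m a c b @ (a, b) # Ur m c b a @ rest)" by simp
  also have "\<dots> = run (cf(a := [(Suc k, s)], c := ?T)) ((a, b) # Ur m c b a @ rest)"
    by (rule Xr_run[where k="Suc k" and LA="[(Suc k, s)]"]) (use P in \<open>auto simp: tower_Suc ok_Suc\<close>)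
  also have "\<dots> = run (cf(a := [], c := ?T, b := (Suc k, \<not> s) # cf b)) (Ur m c b a @ rest)"
    by (subst move_step[where k=k]) (use P in \<open>auto simp: fun_upd_twist\<close>)
  also have "\<dots> = run cf' rest"
    by (rule Suc.IH[where k="Suc k"]) (use P in \<open>auto simp: ok_Suc fun_eq_iff tower_Suc\<close>)
  finally show ?case .
qed

lemma ZYr_run:
  "(\<forall>k (a::nat) b c (cf::config) LA s rest cf'. posts a b c \<longrightarrow> cf a = tower k m s @ LA \<longrightarrow> ok k s LA \<longrightarrow> ok k (\<not> s) (cf b) \<longrightarrow> cf c = [] \<longrightarrow>
     cf' = cf(a := LA, b := tower k m (\<not> s) @ cf b) \<longrightarrow>
     run cf (Z m a b c @ rest) = run cf' rest) \<and>
   (\<forall>k (a::nat) b c (cf::config) LA s rest cf'. posts a b c \<longrightarrow> cf a = tower k m s @ LA \<longrightarrow> ok k s LA \<longrightarrow> cf b = [] \<longrightarrow> ok k (\<not> s) (cf c) \<longrightarrow>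
     cf' = cf(a := LA, b := tower k m (\<not> s)) \<longrightarrow>
     run cf (Yr m a b c @ rest) = run cf' rest)"
proof (induction m)
  case 0
  then show ?case by (auto simp: fun_upd_idem)
next
  case (Suc m)
  have IZ: "run cf (Z m a b c @ rest) = run cf' rest"
    if "posts a b c" "cf a = tower k m s @ LA" "ok k s LA" "ok k (\<not> s) (cf b)" "cf c = []"
     "cf' = cf(a := LA, b := tower k m (\<not> s) @ cf b)" for k a b c :: nat and cf :: config and LA s rest cf'
    by (rule Suc.IH[THEN conjunct1, rule_format, OF that])
  have IY: "run cf (Yr m a b c @ rest) = run cf' rest"
    if "posts a b c" "cf a = tower k m s @ LA" "ok k s LA" "cf b = []" "ok k (\<not> s) (cf c)"
     "cf' = cf(a := LA, b := tower k m (\<not> s))" for k a b c :: nat and cf :: config and LA s rest cf'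
    by (rule Suc.IH[THEN conjunct2, rule_format, OF that])
  show ?case
  proof (intro conjI allI impI)
    fix k a b c :: nat and cf :: config and LA s rest cf'
    assume P: "posts a b c" "cf a = tower k (Suc m) s @ LA" "ok k s LA" "ok k (\<not> s) (cf b)" "cf c = []"
     "cf' = cf(a := LA, b := tower k (Suc m) (\<not> s) @ cf b)"
    let ?T' = "tower (Suc k) m (\<not> s)"
    have "run cf (Z (Suc m) a b c @ rest)
        = run cf (Yr m a c b @ (a, b) # X m c b a @ rest)" by simp
    also have "\<dots> = run (cf(a := (Suc k, s) # LA, c := ?T')) ((a, b) # X m c b a @ rest)"
      by (rule IY[where k="Suc k" and LA="(Suc k, s) # LA"]) (use P in \<open>auto simp: tower_Suc ok_Suc\<close>)
    also have "\<dots> = run (cf(a := LA, c := ?T', b := (Suc k, \<not> s) # cf b)) (X m c b a @ rest)"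
      by (subst move_step[where k=k]) (use P in \<open>auto simp: fun_upd_twist\<close>)
    also have "\<dots> = run cf' rest"
      by (rule X_run[where k="Suc k"]) (use P in \<open>auto simp: ok_Suc fun_eq_iff tower_Suc\<close>)
    finally show "run cf (Z (Suc m) a b c @ rest) = run cf' rest" .
  next
    fix k a b c :: nat and cf :: config and LA s rest cf'
    assume P: "posts a b c" "cf a = tower k (Suc m) s @ LA" "ok k s LA" "cf b = []" "ok k (\<not> s) (cf c)"
     "cf' = cf(a := LA, b := tower k (Suc m) (\<not> s))"
    let ?T' = "tower (Suc k) m (\<not> s)"
    have "run cf (Yr (Suc m) a b c @ rest)
        = run cf (Z m a c b @ (a, b) # e2e m c b a @ rest)" by simp
    also have "\<dots> = run (cf(a := (Suc k, s) # LA, c := ?T' @ cf c)) ((a, b) # e2e m c b a @ rest)"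
      by (rule IZ[where k="Suc k" and LA="(Suc k, s) # LA"]) (use P in \<open>auto simp: tower_Suc ok_Suc\<close>)
    also have "\<dots> = run (cf(a := LA, c := ?T' @ cf c, b := [(Suc k, \<not> s)])) (e2e m c b a @ rest)"
      by (subst move_step[where k=k]) (use P in \<open>auto simp: fun_upd_twist\<close>)
    also have "\<dots> = run cf' rest"
      by (rule e2e_run[where k="Suc k" and LA="cf c"]) (use P in \<open>auto simp: ok_Suc fun_eq_iff tower_Suc\<close>)
    finally show "run cf (Yr (Suc m) a b c @ rest) = run cf' rest" .
  qed
qed

lemma Yr_run:
  "posts a b c \<Longrightarrow> cf a = tower k m s @ LA \<Longrightarrow> ok k s LA \<Longrightarrow> cf b = [] \<Longrightarrow> ok k (\<not> s) (cf c) \<Longrightarrow>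
     cf' = cf(a := LA, b := tower k m (\<not> s)) \<Longrightarrow>
     run cf (Yr m a b c @ rest) = run cf' rest"
  by (rule ZYr_run[THEN conjunct2, rule_format])

lemma Vr_run:
  "posts a b c \<Longrightarrow> cf a = tower k m s \<Longrightarrow> ok k s (cf b) \<Longrightarrow> cf c = [] \<Longrightarrow>
   cf' = cf(a := [], b := tower k m s @ cf b) \<Longrightarrow>
   run cf (Vr m a b c @ rest) = run cf' rest"
proof (cases m)
  case 0
  then show "posts a b c \<Longrightarrow> cf a = tower k m s \<Longrightarrow> ok k s (cf b) \<Longrightarrow> cf c = [] \<Longrightarrow>
   cf' = cf(a := [], b := tower k m s @ cf b) \<Longrightarrow> run cf (Vr m a b c @ rest) = run cf' rest"
    by (simp add: fun_upd_idem)
next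
  case (Suc j)
  assume P: "posts a b c" "cf a = tower k m s" "ok k s (cf b)" "cf c = []"
    "cf' = cf(a := [], b := tower k m s @ cf b)"
  let ?T = "tower (Suc k) j s"
  let ?T' = "tower (Suc k) j (\<not> s)"
  have "run cf (Vr m a b c @ rest)
      = run cf (e2e j a b c @ (a, c) # Yr j b a c @ (c, b) # Ur j a b c @ rest)" using Suc by simp
  also have "\<dots> = run (cf(a := [(Suc k, s)], b := ?T @ cf b)) ((a, c) # Yr j b a c @ (c, b) # Ur j a b c @ rest)"
    by (rule e2e_run[where k="Suc k" and LA="[(Suc k, s)]"]) (use P Suc in \<open>auto simp: tower_Suc ok_Suc\<close>)
  also have "\<dots> = run (cf(a := [], b := ?T @ cf b, c := [(Suc k, \<not> s)])) (Yr j b a c @ (c, b) # Ur j a b c @ rest)"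
    by (subst move_step[where k=k]) (use P in \<open>auto simp: fun_upd_twist\<close>)
  also have "\<dots> = run (cf(a := ?T', b := cf b, c := [(Suc k, \<not> s)])) ((c, b) # Ur j a b c @ rest)"
    by (rule Yr_run[where k="Suc k" and LA="cf b"]) (use P in \<open>auto simp: ok_Suc fun_eq_iff\<close>)
  also have "\<dots> = run (cf(a := ?T', b := (Suc k, s) # cf b, c := [])) (Ur j a b c @ rest)"
    by (subst move_step[where k=k]) (use P in \<open>auto simp: fun_upd_twist\<close>)
  also have "\<dots> = run cf' rest"
    by (rule Ur_run[where k="Suc k"]) (use P Suc in \<open>auto simp: ok_Suc fun_eq_iff tower_Suc\<close>)
  finally show ?thesis .
qed

definition sol :: "nat \<Rightarrow> nat \<Rightarrow> (nat \<times> nat) list" where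
  "sol N D = U (N - 1) 0 (3 - D) D @ (0, D) # Vr (N - 1) (3 - D) D 0"

lemma sol_run:
  assumes "N \<ge> 1" "D \<in> {1, 2}"
  shows "\<exists>c. run (initial_config N) (sol N D) = Some c \<and> solved N D c"
proof -
  obtain n where N: "N = Suc n" using assms(1) by (cases N) auto
  let ?I = "3 - D"
  let ?c0 = "initial_config N"
  have ps: "posts 0 ?I D" using assms(2) by auto
  have c0: "?c0 0 = tower 1 n True @ [(1, True)]" "?c0 ?I = []" "?c0 D = []"
    using assms(2) by (auto simp: initial_config_def N tower_def upt_conv_Cons)
  have n1: "N - 1 = n" using N by simp
  let ?c3 = "?c0(0 := [], D := tower 1 n False @ [(1, False)], ?I := [])"
  have "run ?c0 (sol N D @ []) = run (?c0(0 := [(1, True)], ?I := tower 1 n False)) ((0, D) # Vr n ?I D 0 @ [])"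
    unfolding sol_def
    by (simp only: n1 append_assoc append_Cons, rule U_run[where k=1 and LA="[(1, True)]"])
       (use ps c0 in \<open>auto simp: fun_eq_iff\<close>)
  also have "\<dots> = run (?c0(0 := [], ?I := tower 1 n False, D := [(1, False)])) (Vr n ?I D 0 @ [])"
    by (subst move_step[where k=0]) (use ps c0 in \<open>auto simp: fun_upd_twist\<close>)
  also have "\<dots> = run ?c3 []"
    by (rule Vr_run[where k=1]) (use ps c0 in \<open>auto simp: fun_eq_iff\<close>)
  finally have r: "run ?c0 (sol N D) = Some ?c3" by simp
  have "solved N D ?c3"
    using assms(2) unfolding solved_def
    by (auto simp: N tower_def initial_config_def upt_conv_Cons rev_map[symmetric] map_append o_def)
  with r show ?thesis by blast
qed


lemma len_e2e: "length (e2e m a b c) + 1 = 3 ^ m"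
proof (induction m arbitrary: a b c)
  case (Suc m)
  have "length (e2e (Suc m) a b c) = length (e2e m a b c) + length (e2e m b a c) + length (e2e m a b c) + 2" by simp
  then show ?case using Suc.IH[of a b c] Suc.IH[of b a c] by simp
qed simp

lemma len_c2e: "2 * length (c2e m a b c) + 1 = 3 ^ m"
proof (induction m arbitrary: a b c)
  case (Suc m)
  have "length (e2e m c b a) + 1 = 3 ^ m" by (rule len_e2e)
  with Suc[of a c b] show ?case by simp
qed simp

lemma len_e2c: "2 * length (e2c m a b c) + 1 = 3 ^ m"
proof (induction m arbitrary: a b c)
  case (Suc m)
  have "length (e2e m a c b) + 1 = 3 ^ m" by (rule len_e2e)
  with Suc[of c b a] show ?case by simp
qed simp

lemma len_X: "length (X (Suc m) a b c) = 2 * 3 ^ m"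
  using len_e2e[of m a b c] len_c2e[of m b a c] len_e2c[of m a b c] by simp

lemma len_Xr: "length (Xr (Suc m) a b c) = 2 * 3 ^ m"
  using len_e2e[of m a b c] len_c2e[of m a b c] len_e2c[of m b a c] by simp

fun xl :: "nat \<Rightarrow> nat" where "xl 0 = 0" | "xl (Suc m) = 2 * 3 ^ m"

lemma len_X': "length (X m a b c) = xl m" by (cases m) (simp_all add: len_X del: X.simps(2))
lemma len_Xr': "length (Xr m a b c) = xl m" by (cases m) (simp_all add: len_Xr del: Xr.simps(2))

lemma len_U: "length (U (Suc m) a b c) = 3 ^ m + m"
proof (induction m arbitrary: a b c)
  case 0 then show ?case by simp
next
  case (Suc m)
  have "length (U (Suc (Suc m)) a b c) = length (U (Suc m) a c b) + 1 + length (X (Suc m) c b a)"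
    by (simp del: U.simps X.simps add: U.simps(2)[of "Suc m"])
  then show ?case using Suc[of a c b] len_X[of m c b a] by simp
qed

lemma len_Ur: "length (Ur (Suc m) a b c) = 3 ^ m + m"
proof (induction m arbitrary: a b c)
  case 0 then show ?case by simp
next
  case (Suc m)
  have "length (Ur (Suc (Suc m)) a b c) = length (Xr (Suc m) a c b) + 1 + length (Ur (Suc m) c b a)"
    by (simp del: Ur.simps Xr.simps add: Ur.simps(2)[of "Suc m"])
  then show ?case using Suc[of c b a] len_Xr[of m a c b] by simp
qed

fun zl :: "nat \<Rightarrow> nat" where
  "zl 0 = 0" | "zl (Suc 0) = 1" | "zl (Suc (Suc m)) = zl m + 3 ^ Suc m + 1"

fun yl :: "nat \<Rightarrow> nat" where "yl 0 = 0" | "yl (Suc m) = zl m + 3 ^ m"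

lemma len_ZYr: "(\<forall>a b c. length (Z m a b c) = zl m) \<and> (\<forall>a b c. length (Yr m a b c) = yl m)"
proof (induction m)
  case 0 then show ?case by simp
next
  case (Suc m)
  have z: "length (Z (Suc m) a b c) = zl (Suc m)" for a b c
  proof -
    have "length (Z (Suc m) a b c) = yl m + 1 + xl m"
      using Suc len_X'[of m c b a] by simp
    then show ?thesis by (cases m) auto
  qed
  have y: "length (Yr (Suc m) a b c) = yl (Suc m)" for a b c
    using Suc len_e2e[of m c b a] by simp
  show ?case using z y by blast
qed

lemma len_Vr: "length (Vr (Suc m) a b c) = 3 ^ m + yl m + 1 + length (Ur m a b c)"
  using len_e2e[of m a b c] len_ZYr[of m] by simp

lemma len_sol: "length (sol (Suc n) D) = length (U n 0 (3 - D) D) + 1 + length (Vr n (3 - D) D 0)"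
  by (simp add: sol_def)

lemma zl_SSF: "real (zl (Suc j)) = SSF (Suc j) \<and> real (zl (Suc (Suc j))) = SSF (Suc (Suc j))"
proof (induction j)
  case 0 then show ?case by (simp add: SSF_def)
next
  case (Suc j)
  have "SSF (Suc (Suc (Suc j))) = SSF (Suc j) + 3 ^ Suc (Suc j) + 1"
    by (cases "even j") (auto simp: SSF_def field_simps)
  then show ?case using Suc by simp
qed

lemma count_sol:
  assumes "N \<ge> 1" shows "real (length (sol N D)) = S62 N"
proof -
  obtain n where N: "N = Suc n" using assms by (cases N) auto
  have "n = 0 \<or> n = 1 \<or> n = 2 \<or> (\<exists>j. n = j + 3)" by presburger
  then consider "n = 0" | "n = 1" | "n = 2" | j where "n = j + 3" by blast
  then show ?thesis
  proof cases
    case 1 then show ?thesis by (simp add: N sol_def S62_def)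
  next
    case 2 then show ?thesis by (simp add: N sol_def S62_def numeral_eq_Suc)
  next
    case 3 then show ?thesis by (simp add: N sol_def S62_def numeral_eq_Suc)
  next
    case 4
    have n3: "n = Suc (Suc (Suc j))" using 4 by simp
    have u: "length (U n 0 (3 - D) D) = 3 ^ Suc (Suc j) + Suc (Suc j)" unfolding n3 by (rule len_U)
    have ur: "length (Ur (Suc (Suc j)) (3 - D) D 0) = 3 ^ Suc j + Suc j" by (rule len_Ur)
    have v0: "length (Vr n (3 - D) D 0) = 3 ^ Suc (Suc j) + yl (Suc (Suc j)) + 1 + length (Ur (Suc (Suc j)) (3 - D) D 0)"
      unfolding n3 by (rule len_Vr)
    have z: "real (zl (Suc j)) = SSF (Suc j)" using zl_SSF by blast
    have "length (sol N D) = length (U n 0 (3 - D) D) + 1 + length (Vr n (3 - D) D 0)"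
      unfolding N by (rule len_sol)
    also have "\<dots> = 3 ^ Suc (Suc j) + Suc (Suc j) + 1 + (3 ^ Suc (Suc j) + (zl (Suc j) + 3 ^ Suc j) + 1 + (3 ^ Suc j + Suc j))"
      using u v0 ur by simp
    finally have "real (length (sol N D)) = real (3 ^ Suc (Suc j) + Suc (Suc j) + 1 + (3 ^ Suc (Suc j) + (zl (Suc j) + 3 ^ Suc j) + 1 + (3 ^ Suc j + Suc j)))"
      by (simp only:)
    also have "\<dots> = S62 N"
      using z n3 N by (simp add: S62_def S100_def S67_def numeral_eq_Suc field_simps)
    finally show ?thesis .
  qed
qed


lemma S62_bounds:
  fixes j :: nat
  shows "201/8 * 3^j \<le> S62 (j+4) \<and> S62 (j+4) \<le> 201/8 * 3^j + 3 * real j + 10"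
proof -
  have e: "j + 4 - 2 = j + 2" "j + 4 - 3 = j + 1" "j + 4 - 1 = j + 3" "j + 3 - 1 = j + 2" "j + 2 - 1 = j + 1"
    "j + 1 - 1 = j" by auto
  have p: "(3::real) ^ (j + 2) = 9 * 3 ^ j" "(3::real) ^ (j + 1) = 3 * 3 ^ j"
    by (simp_all add: power_add)
  have x: "(0::real) < 3 ^ j" by simp
  have j0: "0 \<le> real j" by simp
  show ?thesis
    unfolding S62_def S100_def S67_def SSF_def using x j0
    apply (simp add: e p split: if_split)
    apply (intro conjI impI)
       apply (simp_all add: field_simps)
    done
qed

lemma S62_limit: "(\<lambda>N. S62 N / ((3 ^ N - 1) / 2)) \<longlonglongrightarrow> 67 / 108"
proof (rule LIMSEQ_offset[where k=4])
  define r where "r j = S62 (j+4) - 201/8 * 3^j" for j :: nat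
  have rb: "0 \<le> r j \<and> r j \<le> 3 * real j + 10" for j
    using S62_bounds[of j] by (simp add: r_def)
  have eq: "S62 (j + 4) / ((3 ^ (j + 4) - 1) / 2) = (201/4 + 2 * (r j / 3^j)) / (81 - (1/3)^j)" for j :: nat
  proof -
    have x: "(0::real) < 3 ^ j" by simp
    have x1: "(1::real) \<le> 3 ^ j" by simp
    have d: "81 * (3::real) ^ j - 1 \<noteq> 0" using x1 by linarith
    have "(3::real) ^ (j + 4) = 81 * 3 ^ j" by (simp add: power_add)
    moreover have "(1/3::real)^j = 1 / 3^j" by (simp add: power_one_over)
    ultimately show ?thesis using x d by (simp add: r_def field_simps)
  qed
  have h1: "(\<lambda>j. real j / 3 ^ j) \<longlonglongrightarrow> (0::real)"
    using lim_n_over_pown[of "3::real"] by simp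
  have h2: "(\<lambda>j. (1/3::real) ^ j) \<longlonglongrightarrow> 0"
    by (rule LIMSEQ_power_zero) simp
  have h3: "(\<lambda>j. 3 * (real j / 3 ^ j) + 10 * (1/3::real) ^ j) \<longlonglongrightarrow> 0"
    using tendsto_add[OF tendsto_mult[OF tendsto_const h1] tendsto_mult[OF tendsto_const h2]] by simp
  have h4: "(\<lambda>j. r j / 3 ^ j) \<longlonglongrightarrow> 0"
  proof (rule tendsto_sandwich[OF _ _ tendsto_const h3])
    show "\<forall>\<^sub>F j in sequentially. 0 \<le> r j / 3 ^ j" using rb by simp
    show "\<forall>\<^sub>F j in sequentially. r j / 3 ^ j \<le> 3 * (real j / 3 ^ j) + 10 * (1 / 3) ^ j"
    proof (rule always_eventually, rule allI)
      fix j
      have x: "(0::real) < 3 ^ j" by simp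
      have "r j / 3 ^ j \<le> (3 * real j + 10) / 3 ^ j"
        using rb[of j] x by (simp add: divide_right_mono)
      also have "\<dots> = 3 * (real j / 3 ^ j) + 10 * (1 / 3) ^ j"
        by (simp add: power_one_over add_divide_distrib)
      finally show "r j / 3 ^ j \<le> 3 * (real j / 3 ^ j) + 10 * (1 / 3) ^ j" .
    qed
  qed
  have "(\<lambda>j. (201/4 + 2 * (r j / 3^j)) / (81 - (1/3::real)^j)) \<longlonglongrightarrow> (201/4 + 2 * 0) / (81 - 0)"
    by (intro tendsto_intros h4 h2) simp
  then have "(\<lambda>j. (201/4 + 2 * (r j / 3^j)) / (81 - (1/3::real)^j)) \<longlonglongrightarrow> 67 / 108" by simp
  then show "(\<lambda>j. S62 (j + 4) / ((3 ^ (j + 4) - 1) / 2)) \<longlonglongrightarrow> 67 / 108"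
    by (simp only: eq)
qed

theorem mainTheorem4:
  shows "(\<forall>N \<ge> 1. \<forall>D \<in> {1, 2}. \<exists>k. real k = S62 N \<and> solves_in N D k) \<and>
         (\<lambda>N. S62 N / ((3 ^ N - 1) / 2)) \<longlonglongrightarrow> 67 / 108"
proof (intro conjI allI impI ballI)
  fix N D :: nat
  assume N: "N \<ge> 1" and D: "D \<in> {1, 2}"
  obtain c where "run (initial_config N) (sol N D) = Some c" "solved N D c" using sol_run[OF N D] by blast
  then have "solves_in N D (length (sol N D))" unfolding solves_in_def by blast
  then show "\<exists>k. real k = S62 N \<and> solves_in N D k" using count_sol[OF N] by blast
next
  show "(\<lambda>N. S62 N / ((3 ^ N - 1) / 2)) \<longlonglongrightarrow> 67 / 108" by (rule S62_limit)
qed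

end
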